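(* Let $K=2$ and suppose that for every horizon $T$ (a multiple of $100$) a valid pair $(\eta,\gamma)=(\eta_T,\gamma_T)$ in the non-trivial regime is chosen. Then there exists $T_0$ such that for all $T\ge T_0$, WSU-UX run on the two-phase loss sequence satisfies $\mathbb{E}[\pi_{t,2}]\le\frac14$ for every round $t$ with $T_1+T_2+T_3<t\le T$.
   Context: WSU-UX. Fix integers $K\ge 2$ and $T\ge 1$ and hyperparameters $\eta,\gamma$. The pair $(\eta,\gamma)$ is called valid if $\eta,\gamma\in(0,1/2)$ and $\eta K/\gamma\le 1/2$. Given a fixed loss sequence $\ell_t\in[0,1]^K$, WSU-UX sets $\pi_{1,i}=1/K$ and in each round $t$: forms $\tilde\pi_{t,i}=(1-\gamma)\pi_{t,i}+\gamma/K$; draws $I_t$ with $\Pr(I_t=i\mid\mathcal F_{t-1})=\tilde\pi_{t,i}$; sets $\hat\ell_{t,i}=\ell_{t,i}\mathbf 1[I_t=i]/\tilde\pi_{t,i}$; and updates $\pi_{t+1,i}=\pi_{t,i}\bigl(1-\eta(\hat\ell_{t,i}-\sum_{j}\pi_{t,j}\hat\ell_{t,j})\bigr)$; $\mathcal F_t$ is the history generated by $I_1,\dots,I_t$. Non-trivial regime: $\eta\ge T^{-2/3}$ and $\gamma\le T^{-1/3}$. Two-phase loss sequence ($K=2$, $T$ a multiple of $100$): with $T_1=\frac{T}{100}$, $\ell_{t,1}=1,\ell_{t,2}=0$ for $1\le t\le T_1$ and $\ell_{t,1}=0,\ell_{t,2}=1$ for $T_1<t\le T$. Further $T_2=\frac{2}{10}T$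 and $T_3=\frac{1}{10}T$. *)

theory Defs
  imports Complex_Main
begin

text \<open>Arms are indexed 1..K. Losses: loss t i for round t (1-based) and arm i.
  A history h is the list [I_1, ..., I_n] of drawn arms (chronological).\<close>

definition valid_pair :: "nat \<Rightarrow> real \<Rightarrow> real \<Rightarrow> bool" where
  "valid_pair K eta gamma \<longleftrightarrow>
     0 < eta \<and> eta < 1/2 \<and> 0 < gamma \<and> gamma < 1/2 \<and> eta * real K / gamma \<le> 1/2"

definition nontrivial_regime :: "nat \<Rightarrow> real \<Rightarrow> real \<Rightarrow> bool" where
  "nontrivial_regime T eta gamma \<longleftrightarrow>
     eta \<ge> real T powr (-2/3) \<and> gamma \<le> real T powr (-1/3)"

definition mix :: "nat \<Rightarrow> real \<Rightarrow> (nat \<Rightarrow> real) \<Rightarrow> nat \<Rightarrow> real" where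
  "mix K gamma p i = (1 - gamma) * p i + gamma / real K"

definition lhat :: "nat \<Rightarrow> real \<Rightarrow> (nat \<Rightarrow> nat \<Rightarrow> real) \<Rightarrow> nat \<Rightarrow> (nat \<Rightarrow> real) \<Rightarrow> nat \<Rightarrow> nat \<Rightarrow> real" where
  "lhat K gamma loss t p I i = (if i = I then loss t i / mix K gamma p i else 0)"

definition wsu_step :: "nat \<Rightarrow> real \<Rightarrow> real \<Rightarrow> (nat \<Rightarrow> nat \<Rightarrow> real) \<Rightarrow> nat \<Rightarrow> (nat \<Rightarrow> real) \<Rightarrow> nat \<Rightarrow> nat \<Rightarrow> real" where
  "wsu_step K eta gamma loss t p I i =
     p i * (1 - eta * (lhat K gamma loss t p I i - (\<Sum>j=1..K. p j * lhat K gamma loss t p I j)))"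

text \<open>wsu_pi K eta gamma loss h n = pi_{n+1} as a function of the history h
  (only the first n entries of h are used).\<close>
fun wsu_pi :: "nat \<Rightarrow> real \<Rightarrow> real \<Rightarrow> (nat \<Rightarrow> nat \<Rightarrow> real) \<Rightarrow> nat list \<Rightarrow> nat \<Rightarrow> nat \<Rightarrow> real" where
  "wsu_pi K eta gamma loss h 0 = (\<lambda>i. 1 / real K)"
| "wsu_pi K eta gamma loss h (Suc n) =
     wsu_step K eta gamma loss (Suc n) (wsu_pi K eta gamma loss h n) (h ! n)"

definition hist_prob :: "nat \<Rightarrow> real \<Rightarrow> real \<Rightarrow> (nat \<Rightarrow> nat \<Rightarrow> real) \<Rightarrow> nat list \<Rightarrow> real" where
  "hist_prob K eta gamma loss h =
     (\<Prod>s<length h. mix K gamma (wsu_pi K eta gamma loss h s) (h ! s))"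

definition histories :: "nat \<Rightarrow> nat \<Rightarrow> nat list set" where
  "histories K n = {h. length h = n \<and> set h \<subseteq> {1..K}}"

text \<open>E[pi_{t,i}] for round t \<ge> 1: pi_t depends on I_1..I_{t-1}.\<close>
definition expected_pi :: "nat \<Rightarrow> real \<Rightarrow> real \<Rightarrow> (nat \<Rightarrow> nat \<Rightarrow> real) \<Rightarrow> nat \<Rightarrow> nat \<Rightarrow> real" where
  "expected_pi K eta gamma loss t i =
     (\<Sum>h\<in>histories K (t - 1).
        hist_prob K eta gamma loss h * wsu_pi K eta gamma loss h (t - 1) i)"

text \<open>Two-phase loss sequence for horizon T (K = 2), T_1 = T/100.\<close>
definition two_phase_loss :: "nat \<Rightarrow> nat \<Rightarrow> nat \<Rightarrow> real" where
  "two_phase_loss T t i =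
     (if real t \<le> real T / 100
      then (if i = 1 then 1 else 0)
      else (if i = 2 then 1 else 0))"

end

theory Submission
  imports Defs
begin
lemma sum12: "(\<Sum>j=1..2::nat. f j) = f 1 + f 2" "(\<Sum>j=Suc 0..2::nat. f j) = f 1 + f 2"
  by (simp_all add: numeral_2_eq_2)

lemma step_ph1:
  assumes "l t 1 = 1" "l t 2 = 0" "p 1 + p 2 = 1" "mix 2 g p 1 \<noteq> 0"
  shows "wsu_step 2 e g l t p 1 1 = p 1 * (1 - e * p 2 / mix 2 g p 1)"
    "wsu_step 2 e g l t p 1 2 = p 2 * (1 + e * p 1 / mix 2 g p 1)"
    "wsu_step 2 e g l t p 2 i = p i"
proof -
  have h: "e * (p 1 * p 1) + e * (p 1 * p 2) = e * p 1" 
    by (metis assms(3) distrib_left mult.right_neutral)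
  show "wsu_step 2 e g l t p 1 1 = p 1 * (1 - e * p 2 / mix 2 g p 1)"
    using assms h by (auto simp: wsu_step_def lhat_def sum12 field_simps)
qed (use assms in \<open>auto simp: wsu_step_def lhat_def sum12 field_simps\<close>)

lemma step_ph2:
  assumes "l t 1 = 0" "l t 2 = 1" "p 1 + p 2 = 1" "mix 2 g p 2 \<noteq> 0"
  shows "wsu_step 2 e g l t p 2 1 = p 1 * (1 + e * p 2 / mix 2 g p 2)"
    "wsu_step 2 e g l t p 2 2 = p 2 * (1 - e * p 1 / mix 2 g p 2)"
    "wsu_step 2 e g l t p 1 i = p i"
proof -
  have h: "e * (p 1 * p 2) + e * (p 2 * p 2) = e * p 2" 
    by (metis assms(3) distrib_left mult.right_neutral mult.commute)
  show "wsu_step 2 e g l t p 2 2 = p 2 * (1 - e * p 1 / mix 2 g p 2)"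
    using assms h by (auto simp: wsu_step_def lhat_def sum12 field_simps)
qed (use assms in \<open>auto simp: wsu_step_def lhat_def sum12 field_simps\<close>)
lemma alg1:
  fixes p1 p2 e g :: real
  assumes p: "0 < p1" "0 \<le> p2" "p1 + p2 = 1"
    and par: "0 < e" "e < 1/2" "0 < g" "g < 1/2" "e * 2 / g \<le> 1/2"
  defines "m1 \<equiv> (1 - g) * p1 + g / 2" and "m2 \<equiv> (1 - g) * p2 + g / 2"
  shows "0 < p1 * (1 - e * p2 / m1)" "0 \<le> p2 * (1 + e * p1 / m1)"
    "m1 * ((p2 * (1 + e * p1 / m1)) / (p1 * (1 - e * p2 / m1))) + m2 * (p2 / p1)
       \<le> (1 + 2 * e) * (p2 / p1)"
proof -
  have e4: "4 * e \<le> g" using par by (simp add: field_simps)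
  have m1g: "m1 \<ge> g/2" unfolding m1_def using p par by simp
  have m1pos: "m1 > 0" using m1g par by linarith
  have ep2: "e * p2 \<le> e" using p par by (simp add: mult_left_le)
  define D where "D = m1 - e * p2"
  have Dpos: "D > 0" unfolding D_def using m1g e4 ep2 par by linarith
  have Dm: "2 * e * p2 \<le> m1" using m1g e4 ep2 par by linarith
  have f1: "1 - e * p2 / m1 = D / m1" unfolding D_def using m1pos by (simp add: field_simps)
  have f2: "1 + e * p1 / m1 = (m1 + e * p1) / m1" using m1pos by (simp add: field_simps)
  show "0 < p1 * (1 - e * p2 / m1)" unfolding f1 using p Dpos m1pos by simp
  show "0 \<le> p2 * (1 + e * p1 / m1)" unfolding f2 using p par m1pos by simp
  have msum: "m2 = 1 - m1" unfolding m1_def m2_def using p by (simp add: algebra_simps flip: distrib_left)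
  have key: "m1 * (m1 + e * p1) + m2 * D = D + e * m1"
    unfolding msum D_def using p(3)
    by (simp add: algebra_simps) (metis distrib_left mult.commute mult.right_neutral)
  have key2: "m1 * (m1 + e * p1) + m2 * D \<le> (1 + 2 * e) * D"
    unfolding key using Dm par(1) unfolding D_def by (simp add: algebra_simps)
  have "m1 * ((p2 * (1 + e * p1 / m1)) / (p1 * (1 - e * p2 / m1))) + m2 * (p2 / p1)
       = (p2 / p1) * ((m1 * (m1 + e * p1) + m2 * D) / D)"
    unfolding f1 f2 using m1pos Dpos p by (simp add: field_simps)
  also have "\<dots> \<le> (p2 / p1) * (1 + 2 * e)"
    apply (rule mult_left_mono)
    using key2 Dpos p by (simp_all add: divide_le_eq)
  finally show "m1 * ((p2 * (1 + e * p1 / m1)) / (p1 * (1 - e * p2 / m1))) + m2 * (p2 / p1)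
       \<le> (1 + 2 * e) * (p2 / p1)" by (simp add: mult.commute)
qed

lemma alg2:
  fixes p1 p2 e g :: real
  assumes p: "0 < p1" "0 \<le> p2" "p1 + p2 = 1"
    and par: "0 < e" "e < 1/2" "0 < g" "g < 1/2" "e * 2 / g \<le> 1/2"
  defines "m1 \<equiv> (1 - g) * p1 + g / 2" and "m2 \<equiv> (1 - g) * p2 + g / 2"
  shows "0 < p1 * (1 + e * p2 / m2)" "0 \<le> p2 * (1 - e * p1 / m2)"
    "m1 * (p2 / p1) + m2 * ((p2 * (1 - e * p1 / m2)) / (p1 * (1 + e * p2 / m2)))
       \<le> (1 - e / 2) * (p2 / p1)"
proof -
  have e4: "4 * e \<le> g" using par by (simp add: field_simps)
  have m2g: "m2 \<ge> g/2" unfolding m2_def using p par by simp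
  have m2pos: "m2 > 0" using m2g par by linarith
  have ep1: "e * p1 \<le> e" using p par by (simp add: mult_left_le)
  have ep2: "e * p2 \<le> e" using p par by (simp add: mult_left_le)
  have "g * p2 \<le> (1/2) * p2" using p par by (intro mult_right_mono) auto
  then have m2p2: "m2 \<ge> p2 / 2" unfolding m2_def using p par by (simp add: algebra_simps)
  have "e * p2 \<le> (1/2) * p2" using par p by (intro mult_right_mono) auto
  then have "e * p2 \<le> p2 / 2" by simp
  then have ep2m: "e * p2 \<le> m2" using m2p2 by linarith
  define D where "D = m2 + e * p2"
  have "e * p2 \<ge> 0" using par p by simp
  then have Dpos: "D > 0" unfolding D_def using m2pos by linarith
  have f1: "1 + e * p2 / m2 = D / m2" unfolding D_def using m2pos by (simp add: field_simps)
  have f2: "1 - e * p1 / m2 = (m2 - e * p1) / m2" using m2pos by (simp add: field_simps)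
  show "0 < p1 * (1 + e * p2 / m2)" unfolding f1 using p Dpos m2pos by simp
  have "m2 - e * p1 \<ge> 0" using m2g e4 ep1 par by linarith
  then show "0 \<le> p2 * (1 - e * p1 / m2)" unfolding f2 using p m2pos by simp
  have msum: "m1 = 1 - m2" unfolding m1_def m2_def using p by (simp add: algebra_simps flip: distrib_left)
  have key: "m1 * D + m2 * (m2 - e * p1) = D - e * m2"
    unfolding msum D_def using p(3)
    by (simp add: algebra_simps) (metis distrib_left mult.commute mult.right_neutral)
  have key2: "m1 * D + m2 * (m2 - e * p1) \<le> (1 - e / 2) * D"
    unfolding key using ep2m par(1) unfolding D_def by (simp add: algebra_simps)
  have "m1 * (p2 / p1) + m2 * ((p2 * (1 - e * p1 / m2)) / (p1 * (1 + e * p2 / m2)))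
       = (p2 / p1) * ((m1 * D + m2 * (m2 - e * p1)) / D)"
    unfolding f1 f2 using m2pos Dpos p by (simp add: field_simps)
  also have "\<dots> \<le> (p2 / p1) * (1 - e / 2)"
    apply (rule mult_left_mono)
    using key2 Dpos p by (simp_all add: divide_le_eq)
  finally show "m1 * (p2 / p1) + m2 * ((p2 * (1 - e * p1 / m2)) / (p1 * (1 + e * p2 / m2)))
       \<le> (1 - e / 2) * (p2 / p1)" by (simp add: mult.commute)
qed
definition inv2 :: "(nat \<Rightarrow> real) \<Rightarrow> bool" where
  "inv2 p \<longleftrightarrow> 0 < p 1 \<and> 0 \<le> p 2 \<and> p 1 + p 2 = 1"

definition ratio :: "(nat \<Rightarrow> real) \<Rightarrow> real" where
  "ratio p = p 2 / p 1"

lemma mix2: "mix 2 g p i = (1 - g) * p i + g / 2"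
  by (simp add: mix_def)

lemma valid2: "valid_pair 2 e g \<longleftrightarrow> 0 < e \<and> e < 1/2 \<and> 0 < g \<and> g < 1/2 \<and> e * 2 / g \<le> 1/2"
  by (simp add: valid_pair_def)

lemma mix_pos:
  assumes "valid_pair 2 e g" "inv2 p" "x \<in> {1,2}"
  shows "mix 2 g p x > 0"
proof -
  have "p x \<ge> 0" using assms(2,3) by (auto simp: inv2_def)
  moreover have "0 < g" "g < 1/2" using assms(1) by (auto simp: valid2)
  ultimately show ?thesis unfolding mix2 by (simp add: add_nonneg_pos)
qed

lemma step_props:
  assumes v: "valid_pair 2 e g" and ip: "inv2 p" and x: "x \<in> {1,2}"
  shows "inv2 (wsu_step 2 e g (two_phase_loss T) t p x)"
    "(\<Sum>y\<in>{1..2}. mix 2 g p y * ratio (wsu_step 2 e g (two_phase_loss T) t p y))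
       \<le> (if real t \<le> real T / 100 then 1 + 2 * e else 1 - e / 2) * ratio p"
proof -
  let ?l = "two_phase_loss T"
  have par: "0 < e" "e < 1/2" "0 < g" "g < 1/2" "e * 2 / g \<le> 1/2" using v by (auto simp: valid2)
  have p: "0 < p 1" "0 \<le> p 2" "p 1 + p 2 = 1" using ip by (auto simp: inv2_def)
  have m1: "mix 2 g p 1 \<noteq> 0" and m2: "mix 2 g p 2 \<noteq> 0" using mix_pos[OF v ip, of 1] mix_pos[OF v ip, of 2] by auto
  note A1 = alg1[OF p par, folded mix2[of g p 1] mix2[of g p 2]]
  note A2 = alg2[OF p par, folded mix2[of g p 1] mix2[of g p 2]]
  have "inv2 (wsu_step 2 e g ?l t p x) \<and>
    (\<Sum>y\<in>{1..2}. mix 2 g p y * ratio (wsu_step 2 e g ?l t p y))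
       \<le> (if real t \<le> real T / 100 then 1 + 2 * e else 1 - e / 2) * ratio p"
  proof (cases "real t \<le> real T / 100")
    case True
    then have l: "?l t 1 = 1" "?l t 2 = 0" by (auto simp: two_phase_loss_def)
    note S = step_ph1[where l="?l" and t=t and p=p and g=g and e=e, OF l p(3) m1]
    have sum1: "p 1 * (1 - e * p 2 / mix 2 g p 1) + p 2 * (1 + e * p 1 / mix 2 g p 1) = 1"
    proof -
      have "p 1 * (1 - e * p 2 / mix 2 g p 1) + p 2 * (1 + e * p 1 / mix 2 g p 1) = p 1 + p 2"
        by (simp add: algebra_simps)
      then show ?thesis using p(3) by simp
    qed
    from x have "x = 1 \<or> x = 2" by auto
    then show ?thesis using True A1 p sum1
      by (elim disjE; simp only: inv2_def S sum12(1) ratio_def; simp add: add.commute)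
  next
    case False
    then have l: "?l t 1 = 0" "?l t 2 = 1" by (auto simp: two_phase_loss_def)
    note S = step_ph2[where l="?l" and t=t and p=p and g=g and e=e, OF l p(3) m2]
    have sum1: "p 1 * (1 + e * p 2 / mix 2 g p 2) + p 2 * (1 - e * p 1 / mix 2 g p 2) = 1"
    proof -
      have "p 1 * (1 + e * p 2 / mix 2 g p 2) + p 2 * (1 - e * p 1 / mix 2 g p 2) = p 1 + p 2"
        by (simp add: algebra_simps)
      then show ?thesis using p(3) by simp
    qed
    from x have "x = 1 \<or> x = 2" by auto
    then show ?thesis using False A2 p sum1
      by (elim disjE; simp only: inv2_def S sum12(1) ratio_def; simp add: add.commute)
  qed
  then show "inv2 (wsu_step 2 e g ?l t p x)"
    "(\<Sum>y\<in>{1..2}. mix 2 g p y * ratio (wsu_step 2 e g ?l t p y))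
       \<le> (if real t \<le> real T / 100 then 1 + 2 * e else 1 - e / 2) * ratio p" by auto
qed
lemma wsu_pi_append:
  "n \<le> length h \<Longrightarrow> wsu_pi K e g l (h @ ys) n = wsu_pi K e g l h n"
  by (induction n) (auto simp: nth_append)

lemma hist_prob_snoc:
  "hist_prob K e g l (h @ [x]) = hist_prob K e g l h * mix K g (wsu_pi K e g l h (length h)) x"
proof -
  have "(\<Prod>s<length h. mix K g (wsu_pi K e g l (h @ [x]) s) ((h @ [x]) ! s))
      = (\<Prod>s<length h. mix K g (wsu_pi K e g l h s) (h ! s))"
    by (rule prod.cong) (auto simp: nth_append wsu_pi_append)
  moreover have "wsu_pi K e g l (h @ [x]) (length h) = wsu_pi K e g l h (length h)"
    by (simp add: wsu_pi_append)
  ultimately show ?thesis unfolding hist_prob_def by simp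
qed

lemma finite_histories: "finite (histories K n)"
  unfolding histories_def using finite_lists_length_eq[of "{1..K}" n]
  by (simp add: conj_commute)

lemma histories_Suc:
  "histories K (Suc n) = (\<lambda>(h,x). h @ [x]) ` (histories K n \<times> {1..K})"
proof
  show "(\<lambda>(h,x). h @ [x]) ` (histories K n \<times> {1..K}) \<subseteq> histories K (Suc n)"
    by (auto simp: histories_def)
next
  show "histories K (Suc n) \<subseteq> (\<lambda>(h,x). h @ [x]) ` (histories K n \<times> {1..K})"
  proof
    fix h' assume h': "h' \<in> histories K (Suc n)"
    then have ne: "h' \<noteq> []" and len: "length h' = Suc n" and st: "set h' \<subseteq> {1..K}"
      by (auto simp: histories_def)
    have eq: "h' = butlast h' @ [last h']" using ne by simp
    have "last h' \<in> set h'" using ne by simp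
    moreover have "set (butlast h') \<subseteq> set h'" by (rule in_set_butlastD[THEN subsetI])
    ultimately have "(butlast h', last h') \<in> histories K n \<times> {1..K}"
      using st len by (auto simp: histories_def)
    then show "h' \<in> (\<lambda>(h,x). h @ [x]) ` (histories K n \<times> {1..K})"
      using eq by (metis (no_types, lifting) case_prod_conv image_eqI)
  qed
qed

lemma sum_histories_Suc:
  "(\<Sum>h\<in>histories K (Suc n). F h) = (\<Sum>h\<in>histories K n. \<Sum>x\<in>{1..K}. F (h @ [x]))"
proof -
  have inj: "inj_on (\<lambda>(h,x). h @ [x]) (histories K n \<times> {1..K})"
    by (auto simp: inj_on_def)
  have "(\<Sum>h\<in>histories K (Suc n). F h) = (\<Sum>y\<in>histories K n \<times> {1..K}. F (case y of (h,x) \<Rightarrow> h @ [x]))"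
    unfolding histories_Suc by (subst sum.reindex[OF inj]) (simp add: comp_def)
  also have "\<dots> = (\<Sum>h\<in>histories K n. \<Sum>x\<in>{1..K}. F (h @ [x]))"
    by (simp add: sum.cartesian_product case_prod_beta)
  finally show ?thesis .
qed

lemma inv_pi:
  assumes v: "valid_pair 2 e g"
  shows "set h \<subseteq> {1,2} \<Longrightarrow> n \<le> length h \<Longrightarrow> inv2 (wsu_pi 2 e g (two_phase_loss T) h n)"
proof (induction n)
  case 0
  then show ?case by (simp add: inv2_def)
next
  case (Suc n)
  then have "h ! n \<in> {1,2}" by (metis Suc_le_eq nth_mem subsetD)
  then show ?case using Suc step_props(1)[OF v] by simp
qed

lemma hist_prob_nonneg:
  assumes v: "valid_pair 2 e g" and h: "h \<in> histories 2 n"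
  shows "hist_prob 2 e g (two_phase_loss T) h \<ge> 0"
  unfolding hist_prob_def
proof (rule prod_nonneg)
  fix s assume s: "s \<in> {..<length h}"
  have st: "set h \<subseteq> {1,2}" using h by (auto simp: histories_def)
  have "h ! s \<in> {1,2}" using s st by (auto dest: nth_mem)
  then show "mix 2 g (wsu_pi 2 e g (two_phase_loss T) h s) (h ! s) \<ge> 0"
    using mix_pos[OF v inv_pi[OF v st, of s T]] s by (auto intro: less_imp_le)
qed

lemma E_step:
  fixes T :: nat
  assumes v: "valid_pair 2 e g"
  defines "l \<equiv> two_phase_loss T"
  shows "(\<Sum>h\<in>histories 2 (Suc n). hist_prob 2 e g l h * ratio (wsu_pi 2 e g l h (Suc n)))
    \<le> (if real (Suc n) \<le> real T / 100 then 1 + 2 * e else 1 - e / 2) *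
       (\<Sum>h\<in>histories 2 n. hist_prob 2 e g l h * ratio (wsu_pi 2 e g l h n))"
proof -
  let ?c = "(if real (Suc n) \<le> real T / 100 then 1 + 2 * e else 1 - e / 2)"
  have "(\<Sum>h\<in>histories 2 (Suc n). hist_prob 2 e g l h * ratio (wsu_pi 2 e g l h (Suc n)))
    = (\<Sum>h\<in>histories 2 n. hist_prob 2 e g l h *
        (\<Sum>x\<in>{1..2}. mix 2 g (wsu_pi 2 e g l h n) x * ratio (wsu_step 2 e g l (Suc n) (wsu_pi 2 e g l h n) x)))"
    unfolding sum_histories_Suc
  proof (rule sum.cong[OF refl])
    fix h assume h: "h \<in> histories 2 n"
    then have len: "length h = n" by (simp add: histories_def)
    show "(\<Sum>x\<in>{1..2}. hist_prob 2 e g l (h @ [x]) * ratio (wsu_pi 2 e g l (h @ [x]) (Suc n))) =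
      hist_prob 2 e g l h *
      (\<Sum>x\<in>{1..2}. mix 2 g (wsu_pi 2 e g l h n) x * ratio (wsu_step 2 e g l (Suc n) (wsu_pi 2 e g l h n) x))"
      unfolding sum_distrib_left
      by (rule sum.cong[OF refl]) (simp add: hist_prob_snoc wsu_pi_append flip: len)
  qed
  also have "\<dots> \<le> (\<Sum>h\<in>histories 2 n. hist_prob 2 e g l h * (?c * ratio (wsu_pi 2 e g l h n)))"
  proof (rule sum_mono)
    fix h assume h: "h \<in> histories 2 n"
    have st: "set h \<subseteq> {1,2}" and len: "length h = n" using h by (auto simp: histories_def)
    have iv: "inv2 (wsu_pi 2 e g l h n)" unfolding l_def using inv_pi[OF v st] len by simp
    show "hist_prob 2 e g l h *
      (\<Sum>x\<in>{1..2}. mix 2 g (wsu_pi 2 e g l h n) x * ratio (wsu_step 2 e g l (Suc n) (wsu_pi 2 e g l h n) x))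
      \<le> hist_prob 2 e g l h * (?c * ratio (wsu_pi 2 e g l h n))"
      apply (rule mult_left_mono)
      using step_props(2)[OF v iv, of 1 T "Suc n"] hist_prob_nonneg[OF v h, of T] unfolding l_def by auto
  qed
  also have "\<dots> = ?c * (\<Sum>h\<in>histories 2 n. hist_prob 2 e g l h * ratio (wsu_pi 2 e g l h n))"
    by (simp add: sum_distrib_left mult.left_commute)
  finally show ?thesis .
qed

lemma E_bound:
  assumes v: "valid_pair 2 e g" and d: "100 dvd T"
  defines "l \<equiv> two_phase_loss T"
  shows "(\<Sum>h\<in>histories 2 n. hist_prob 2 e g l h * ratio (wsu_pi 2 e g l h n))
     \<le> exp (2 * e * real (min n (T div 100)) - e / 2 * real (n - T div 100))"
proof (induction n)
  case 0
  have "histories 2 0 = {[]}" by (auto simp: histories_def)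
  then show ?case by (simp add: hist_prob_def ratio_def)
next
  case (Suc n)
  have par: "0 < e" "e < 1/2" using v by (auto simp: valid2)
  obtain m where m: "T = 100 * m" using d by blast
  have Tm: "T div 100 = m" "real T / 100 = real m" using m by auto
  let ?c = "(if real (Suc n) \<le> real T / 100 then 1 + 2 * e else 1 - e / 2)"
  have c0: "?c \<ge> 0" using par by auto
  have "?c * exp (2 * e * real (min n (T div 100)) - e / 2 * real (n - T div 100))
      \<le> exp (2 * e * real (min (Suc n) (T div 100)) - e / 2 * real (Suc n - T div 100))"
  proof (cases "Suc n \<le> m")
    case True
    then have "?c = 1 + 2 * e" using Tm by simp
    moreover have "1 + 2 * e \<le> exp (2 * e)" using exp_ge_add_one_self[of "2*e"] by simp
    moreover have "exp (2 * e * real (min (Suc n) (T div 100)) - e / 2 * real (Suc n - T div 100))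
       = exp (2 * e) * exp (2 * e * real (min n (T div 100)) - e / 2 * real (n - T div 100))"
      using True Tm by (simp add: exp_add[symmetric] algebra_simps)
    ultimately show ?thesis by (simp add: mult_right_mono)
  next
    case False
    then have "?c = 1 - e / 2" using Tm by simp
    moreover have "1 - e / 2 \<le> exp (- (e / 2))" using exp_ge_add_one_self[of "- (e/2)"] by simp
    moreover have "exp (2 * e * real (min (Suc n) (T div 100)) - e / 2 * real (Suc n - T div 100))
       = exp (- (e / 2)) * exp (2 * e * real (min n (T div 100)) - e / 2 * real (n - T div 100))"
      using False Tm by (simp add: exp_add[symmetric] Suc_diff_le of_nat_diff field_simps)
    ultimately show ?thesis by (simp add: mult_right_mono)
  qed
  then show ?case using E_step[OF v, of T n] Suc.IH c0 unfolding l_def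
    by (meson mult_left_mono order_trans)
qed

lemma powr_third_ge:
  assumes "(27000::real) \<le> x"
  shows "30 \<le> x powr (1/3)"
proof (rule ccontr)
  assume "\<not> 30 \<le> x powr (1/3)"
  then have lt: "x powr (1/3) < 30" by simp
  have xpos: "x > 0" using assms by simp
  have "(x powr (1/3)) ^ 3 = x"
    using xpos by (simp add: powr_realpow[symmetric] powr_powr)
  moreover have "(x powr (1/3)) ^ 3 < 30 ^ 3"
    using lt by (intro power_strict_mono) auto
  ultimately show False using assms by simp
qed

theorem mainTheorem20:
  fixes eta gamma :: "nat \<Rightarrow> real"
  assumes "\<And>T. T \<ge> 1 \<Longrightarrow> 100 dvd T \<Longrightarrow>
             valid_pair 2 (eta T) (gamma T) \<and> nontrivial_regime T (eta T) (gamma T)"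
  shows "\<exists>T0. \<forall>T \<ge> T0. T \<ge> 1 \<longrightarrow> 100 dvd T \<longrightarrow>
           (\<forall>t. real T / 100 + 2 * real T / 10 + real T / 10 < real t \<and> t \<le> T \<longrightarrow>
              expected_pi 2 (eta T) (gamma T) (two_phase_loss T) t 2 \<le> 1/4)"
proof (intro exI[of _ 27000] allI impI, elim conjE)
  fix T t :: nat
  assume T0: "27000 \<le> T" and T1: "1 \<le> T" and d: "100 dvd T"
    and tlo: "real T / 100 + 2 * real T / 10 + real T / 10 < real t" and thi: "t \<le> T"
  define e where "e = eta T"
  define g where "g = gamma T"
  define l where "l = two_phase_loss T"
  have v: "valid_pair 2 e g" and nt: "nontrivial_regime T e g"
    using assms[OF T1 d] unfolding e_def g_def by auto
  have par: "0 < e" "e < 1/2" using v by (auto simp: valid2)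
  obtain m where m: "T = 100 * m" using d by blast
  have tm: "31 * m < t" using tlo m by simp
  define n where "n = t - 1"
  have n: "31 * m \<le> n" "t - 1 = n" using tm n_def by auto
  have Tdiv: "T div 100 = m" using m by simp
  have "expected_pi 2 e g l t 2 = (\<Sum>h\<in>histories 2 n. hist_prob 2 e g l h * wsu_pi 2 e g l h n 2)"
    unfolding expected_pi_def n by simp
  also have "\<dots> \<le> (\<Sum>h\<in>histories 2 n. hist_prob 2 e g l h * ratio (wsu_pi 2 e g l h n))"
  proof (rule sum_mono)
    fix h assume h: "h \<in> histories 2 n"
    have st: "set h \<subseteq> {1,2}" and len: "length h = n" using h by (auto simp: histories_def)
    have iv: "inv2 (wsu_pi 2 e g l h n)" unfolding l_def using inv_pi[OF v st] len by simp
    have r: "wsu_pi 2 e g l h n 2 \<le> ratio (wsu_pi 2 e g l h n)"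
    proof -
      let ?p = "wsu_pi 2 e g l h n"
      have "0 < ?p 1" "?p 1 \<le> 1" "0 \<le> ?p 2" using iv by (auto simp: inv2_def)
      then have "?p 2 * ?p 1 \<le> ?p 2" by (simp add: mult_left_le)
      then show ?thesis unfolding ratio_def using \<open>0 < ?p 1\<close> by (simp add: le_divide_eq)
    qed
    show "hist_prob 2 e g l h * wsu_pi 2 e g l h n 2 \<le> hist_prob 2 e g l h * ratio (wsu_pi 2 e g l h n)"
      using r hist_prob_nonneg[OF v h, of T] unfolding l_def by (simp add: mult_left_mono)
  qed
  also have "\<dots> \<le> exp (2 * e * real (min n (T div 100)) - e / 2 * real (n - T div 100))"
    unfolding l_def by (rule E_bound[OF v d])
  also have "\<dots> \<le> exp (- (13 * e * real m))"
  proof -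
    have "min n m = m" using n by simp
    moreover have "real (n - m) \<ge> 30 * real m" using n by (simp add: of_nat_diff)
    ultimately have "2 * e * real (min n m) - e / 2 * real (n - m) \<le> 2 * e * real m - e / 2 * (30 * real m)"
      using par by (simp add: mult_left_mono)
    then show ?thesis unfolding Tdiv by simp
  qed
  also have "\<dots> \<le> 1/4"
  proof -
    have "e \<ge> real T powr (-2/3)" using nt by (simp add: nontrivial_regime_def)
    then have "e * real T \<ge> real T powr (-2/3) * real T" by (simp add: mult_right_mono)
    also have "real T powr (-2/3) * real T = real T powr (1/3)"
    proof -
      have a: "real T powr 1 = real T" using T1 by simp
      have "real T powr (-2/3 + 1) = real T powr (-2/3) * real T powr 1" by (rule powr_add)
      then show ?thesis by (simp add: a)
    qed
    finally have eT: "e * real T \<ge> real T powr (1/3)" .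
    have "real T powr (1/3) \<ge> 30" using powr_third_ge[of "real T"] T0 by simp
    then have "e * real T \<ge> 30" using eT by simp
    then have em: "13 * e * real m \<ge> 3.9" using m by simp
    have "exp (- (13 * e * real m)) \<le> exp (- 3.9)" using em by simp
    also have "exp (- 3.9) \<le> (1/4 :: real)"
    proof -
      have "1 + 3.9 \<le> exp (3.9 :: real)" by (rule exp_ge_add_one_self)
      then have "4 \<le> exp (3.9 :: real)" by simp
      then show ?thesis by (simp add: exp_minus field_simps)
    qed
    finally show ?thesis .
  qed
  finally show "expected_pi 2 (eta T) (gamma T) (two_phase_loss T) t 2 \<le> 1/4"
    unfolding e_def g_def l_def .
qed

end
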